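(* Consider the multiset combinatorial auction model described in the context. An auction that uses only demand queries cannot guarantee even $55\%$ efficiency, even if it asks all (uncountably many) possible demand queries, i.e., one for every price vector in $[0,\infty)^m$, and even if each bidder additionally reports her true value for every bundle she requested in response to those demand queries. Precisely: there exist $n,m,c$ and value functions $(v_i)_{i\in N}$ such that, for every set $P\subseteq[0,\infty)^m$ of demand-query prices (in particular $P=[0,\infty)^m$), there are truthful demand-query responses and an allocation maximizing the inferred social welfare $\sum_i\tilde v_i(a_i;R_i)$ over $\mathcal{F}$ whose efficiency is less than $55\%$; and the same holds when the reports $R_i$ additionally contain value-query responses $(x,v_i(x))$ for every bundle $x$ that bidder $i$ requested in some demand query in $P$.
   Context: Multiset combinatorial auction: bidders $N=\{1,\dots,n\}$, items $M=\{1,\dots,m\}$ with capacities $c\in\mathbb{N}^m$. Bundles are $x\in\mathcal{X}=\{0,\dots,c_1\}\times\cdots\times\{0,\dots,c_m\}$. Each bidder $i$ has a value function $v_i:\mathcal{X}\to\mathbb{R}_{\ge0}$. Feasible allocations: $\mathcal{F}=\{a\in\mathcal{X}^n:\sum_i a_{ij}\le c_j\ \forall j\}$. Social welfare $V(a)=\sum_i v_i(a_i)$; efficiency of $a$ is $V(a)/\max_{a'\in\mathcal{F}}V(a')$. A demand query at prices $p\in\mathbb{R}^m_{\ge0}$ is answered truthfully by bidder $i$ with some $x_i^*(p)\in\arg\max_{x\in\mathcal{X}}\{v_i(x)-\langle p,x\rangle\}$. A value query for $x$ is answered with $v_i(x)$. With reports $R_i$ consisting of demand responses $R_i^{DQ}$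 (pairs $(x,p)$) and value responses $R_i^{VQ}$ (pairs $(x,v_i(x))$), the inferred value is $\tilde v_i(x;R_i)=v_i(x)$ if $x$ appears in $R_i^{VQ}$ and otherwise the supremum (a maximum when finitely many queries are asked) of $\{\langle x,p\rangle:(x,p)\in R_i^{DQ}\}\cup\{0\}$. The auction allocates according to a solution of the winner determination problem $\max_{a\in\mathcal{F}}\sum_i\tilde v_i(a_i;R_i)$. *)

theory Defs
  imports Complex_Main
begin

text \<open>Items are indexed by 0..<m, bidders by 0..<n. Bundles are functions
  nat => nat, vanishing outside the items; prices are functions nat => real,
  vanishing outside the items.\<close>

definition bundles :: "nat \<Rightarrow> (nat \<Rightarrow> nat) \<Rightarrow> (nat \<Rightarrow> nat) set" where
  "bundles m c = {x. (\<forall>j<m. x j \<le> c j) \<and> (\<forall>j. m \<le> j \<longrightarrow> x j = 0)}"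

definition prices :: "nat \<Rightarrow> (nat \<Rightarrow> real) set" where
  "prices m = {p. (\<forall>j<m. 0 \<le> p j) \<and> (\<forall>j. m \<le> j \<longrightarrow> p j = 0)}"

definition ip :: "nat \<Rightarrow> (nat \<Rightarrow> nat) \<Rightarrow> (nat \<Rightarrow> real) \<Rightarrow> real" where
  "ip m x p = (\<Sum>j<m. real (x j) * p j)"

definition feasible :: "nat \<Rightarrow> nat \<Rightarrow> (nat \<Rightarrow> nat) \<Rightarrow> (nat \<Rightarrow> nat \<Rightarrow> nat) set" where
  "feasible n m c = {a. (\<forall>i<n. a i \<in> bundles m c) \<and> (\<forall>i. n \<le> i \<longrightarrow> a i = (\<lambda>_. 0))
                        \<and> (\<forall>j<m. (\<Sum>i<n. a i j) \<le> c j)}"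

definition welfare :: "nat \<Rightarrow> (nat \<Rightarrow> (nat \<Rightarrow> nat) \<Rightarrow> real) \<Rightarrow> (nat \<Rightarrow> nat \<Rightarrow> nat) \<Rightarrow> real" where
  "welfare n v a = (\<Sum>i<n. v i (a i))"

definition opt_welfare :: "nat \<Rightarrow> nat \<Rightarrow> (nat \<Rightarrow> nat) \<Rightarrow> (nat \<Rightarrow> (nat \<Rightarrow> nat) \<Rightarrow> real) \<Rightarrow> real" where
  "opt_welfare n m c v = Max (welfare n v ` feasible n m c)"

text \<open>Efficiency of a is welfare n v a / opt_welfare n m c v; "efficiency < 55%" is
  stated as welfare n v a < 55/100 * opt_welfare n m c v (which also forces
  the optimum to be positive, so that the ratio is meaningful).\<close>

definition truthful_dq ::
  "nat \<Rightarrow> nat \<Rightarrow> (nat \<Rightarrow> nat) \<Rightarrow> (nat \<Rightarrow> (nat \<Rightarrow> nat) \<Rightarrow> real) \<Rightarrow> (nat \<Rightarrow> real) set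
     \<Rightarrow> (nat \<Rightarrow> (nat \<Rightarrow> real) \<Rightarrow> (nat \<Rightarrow> nat)) \<Rightarrow> bool" where
  "truthful_dq n m c v P dq = (\<forall>i<n. \<forall>p\<in>P. dq i p \<in> bundles m c \<and>
      (\<forall>y\<in>bundles m c. v i y - ip m y p \<le> v i (dq i p) - ip m (dq i p) p))"

definition inferred_dq ::
  "nat \<Rightarrow> (nat \<Rightarrow> real) set \<Rightarrow> (nat \<Rightarrow> (nat \<Rightarrow> real) \<Rightarrow> (nat \<Rightarrow> nat)) \<Rightarrow> nat \<Rightarrow> (nat \<Rightarrow> nat) \<Rightarrow> real" where
  "inferred_dq m P dq i x = Sup ({ip m x p | p. p \<in> P \<and> dq i p = x} \<union> {0})"

definition inferred_dq_vq ::
  "nat \<Rightarrow> (nat \<Rightarrow> (nat \<Rightarrow> nat) \<Rightarrow> real) \<Rightarrow> (nat \<Rightarrow> real) set \<Rightarrow> (nat \<Rightarrow> (nat \<Rightarrow> real) \<Rightarrow> (nat \<Rightarrow> nat))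
     \<Rightarrow> nat \<Rightarrow> (nat \<Rightarrow> nat) \<Rightarrow> real" where
  "inferred_dq_vq m v P dq i x =
     (if \<exists>p\<in>P. dq i p = x then v i x else inferred_dq m P dq i x)"

definition wdp_solution ::
  "nat \<Rightarrow> nat \<Rightarrow> (nat \<Rightarrow> nat) \<Rightarrow> (nat \<Rightarrow> (nat \<Rightarrow> nat) \<Rightarrow> real) \<Rightarrow> (nat \<Rightarrow> nat \<Rightarrow> nat) \<Rightarrow> bool" where
  "wdp_solution n m c vt a = (a \<in> feasible n m c \<and>
      (\<forall>a'\<in>feasible n m c. welfare n vt a' \<le> welfare n vt a))"

end

theory Submission
  imports Defs
begin

definition e :: "nat \<Rightarrow> nat \<Rightarrow> nat" where "e k = (\<lambda>j. if j = 0 then k else 0)"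

definition vv :: "nat \<Rightarrow> (nat \<Rightarrow> nat) \<Rightarrow> real" where
  "vv i x = (if i = 0 then (if 1 \<le> x 0 then 1 else 0)
             else (if x 0 = 20 then 1 else if x 0 = 19 then 9/10 else 0))"

definition dd :: "nat \<Rightarrow> (nat \<Rightarrow> real) \<Rightarrow> nat \<Rightarrow> nat" where
  "dd i p = (if i = 0 then e (if p 0 \<le> 1 then 1 else 0) else e (if p 0 \<le> 1/20 then 20 else 0))"

lemma ip1: "ip 1 x p = real (x 0) * p 0"
  by (simp add: ip_def)

lemma ip1': "ip (Suc 0) x p = real (x 0) * p 0"
  by (simp add: ip_def)

lemma e_neq: "k \<noteq> l \<Longrightarrow> e k \<noteq> e l"
  by (metis e_def)

lemma e0: "e k 0 = k" by (simp add: e_def)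

lemma sum2: "(\<Sum>i<2. f i) = f 0 + f 1" for f :: "nat \<Rightarrow> 'a::comm_monoid_add"
  by (simp add: numeral_2_eq_2)

lemma feas_sub: "feasible 2 1 (\<lambda>_. 20) \<subseteq>
   (\<lambda>(k,l). (\<lambda>i. if i = 0 then e k else if i = 1 then e l else (\<lambda>_. 0))) ` ({..20::nat} \<times> {..20::nat})"
proof
  fix a assume a: "a \<in> feasible 2 1 (\<lambda>_. 20)"
  have b0: "a 0 \<in> bundles 1 (\<lambda>_. 20)" and b1: "a 1 \<in> bundles 1 (\<lambda>_. 20)"
    using a by (auto simp: feasible_def)
  have hi: "\<And>i. 2 \<le> i \<Longrightarrow> a i = (\<lambda>_. 0)" using a by (auto simp: feasible_def)
  have eq: "a = (\<lambda>i. if i = 0 then e (a 0 0) else if i = 1 then e (a 1 0) else (\<lambda>_. 0))"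
  proof
    fix i show "a i = (if i = 0 then e (a 0 0) else if i = 1 then e (a 1 0) else (\<lambda>_. 0))"
    proof (cases "i = 0")
      case True then show ?thesis using b0 by (auto simp: bundles_def e_def fun_eq_iff)
    next
      case F: False
      show ?thesis
      proof (cases "i = 1")
        case True then show ?thesis using b1 by (auto simp: bundles_def e_def fun_eq_iff)
      next
        case False then show ?thesis using F hi by simp
      qed
    qed
  qed
  have mem: "(a 0 0, a 1 0) \<in> {..20::nat} \<times> {..20::nat}" using b0 b1 by (auto simp: bundles_def)
  show "a \<in> (\<lambda>(k,l). (\<lambda>i. if i = 0 then e k else if i = 1 then e l else (\<lambda>_. 0))) ` ({..20::nat} \<times> {..20::nat})"
    by (subst eq) (rule image_eqI[OF _ mem], simp only: case_prod_conv)
qed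

lemma feas_fin: "finite (feasible 2 1 (\<lambda>_. 20))"
  by (rule finite_subset[OF feas_sub]) auto

definition al :: "nat \<Rightarrow> nat \<Rightarrow> nat \<Rightarrow> nat \<Rightarrow> nat" where
  "al k l = (\<lambda>i. if i = 0 then e k else if i = 1 then e l else (\<lambda>_. 0))"

lemma al0: "al k l 0 = e k" and al1: "al k l 1 = e l" by (simp_all add: al_def)

lemma al_feas: "k + l \<le> 20 \<Longrightarrow> al k l \<in> feasible 2 1 (\<lambda>_. 20)"
  unfolding feasible_def bundles_def mem_Collect_eq al_def
  apply (intro conjI allI impI)
  subgoal for i j by (cases "i = 0"; cases "i = 1") (auto simp: e_def)
  subgoal for i j by (cases "i = 0"; cases "i = 1") (auto simp: e_def)
  subgoal for i by simp
  subgoal for j by (simp add: sum2 e_def)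
  done

lemma wel_al: "welfare 2 w (al k l) = w 0 (e k) + w 1 (e l)"
  by (simp only: welfare_def sum2 al0 al1)

lemma opt_ge: "19/10 \<le> opt_welfare 2 1 (\<lambda>_. 20) vv"
proof -
  have fa: "al 1 19 \<in> feasible 2 1 (\<lambda>_. 20)" by (rule al_feas) simp
  have w: "welfare 2 vv (al 1 19) = 19/10"
    by (simp add: wel_al vv_def e_def)
  have "welfare 2 vv (al 1 19) \<le> opt_welfare 2 1 (\<lambda>_. 20) vv"
    unfolding opt_welfare_def by (rule Max_ge[OF finite_imageI[OF feas_fin] imageI[OF fa]])
  then show ?thesis using w by simp
qed

lemma wdp_pick:
  assumes z0: "\<And>x. x \<noteq> e 1 \<Longrightarrow> vt 0 x = 0"
    and z1: "\<And>x. x \<noteq> e 20 \<Longrightarrow> vt 1 x = 0"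
  shows "\<exists>a. wdp_solution 2 1 (\<lambda>_. 20) vt a \<and> welfare 2 vv a \<le> 1"
proof -
  have f0: "al 0 0 \<in> feasible 2 1 (\<lambda>_. 20)" by (rule al_feas) simp
  have f1: "al 1 0 \<in> feasible 2 1 (\<lambda>_. 20)" by (rule al_feas) simp
  have f2: "al 0 20 \<in> feasible 2 1 (\<lambda>_. 20)" by (rule al_feas) simp
  have ne1: "e 0 \<noteq> e 1" by (rule e_neq) simp
  have ne20: "e 0 \<noteq> e 20" by (rule e_neq) simp
  have w0: "welfare 2 vt (al 0 0) = 0"
    using z1[OF ne20] z0[OF ne1] by (simp add: wel_al)
  have w1: "welfare 2 vt (al 1 0) = vt 0 (e 1)"
    using z1[OF ne20] by (simp add: wel_al)
  have w2: "welfare 2 vt (al 0 20) = vt 1 (e 20)"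
    using z0[OF ne1] by (simp add: wel_al)
  have bound: "welfare 2 vt a' \<le> max 0 (max (vt 0 (e 1)) (vt 1 (e 20)))"
    if a': "a' \<in> feasible 2 1 (\<lambda>_. 20)" for a'
  proof -
    have ws: "welfare 2 vt a' = vt 0 (a' 0) + vt 1 (a' 1)" by (simp add: welfare_def sum2)
    have "\<not> (a' 0 = e 1 \<and> a' 1 = e 20)"
    proof
      assume h: "a' 0 = e 1 \<and> a' 1 = e 20"
      have "(\<Sum>i<2. a' i 0) \<le> 20" using a' by (auto simp: feasible_def)
      then have "a' 0 0 + a' 1 0 \<le> 20" by (simp only: sum2)
      then show False using h by (simp add: e0)
    qed
    then have "a' 0 \<noteq> e 1 \<or> a' 1 \<noteq> e 20" by blast
    then show ?thesis
    proof
      assume "a' 0 \<noteq> e 1" then have "vt 0 (a' 0) = 0" by (rule z0)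
      moreover have "vt 1 (a' 1) \<le> max 0 (vt 1 (e 20))"
        using z1[of "a' 1"] by (cases "a' 1 = e 20") auto
      ultimately show ?thesis using ws by simp
    next
      assume "a' 1 \<noteq> e 20" then have "vt 1 (a' 1) = 0" by (rule z1)
      moreover have "vt 0 (a' 0) \<le> max 0 (vt 0 (e 1))"
        using z0[of "a' 0"] by (cases "a' 0 = e 1") auto
      ultimately show ?thesis using ws by simp
    qed
  qed
  have v0: "welfare 2 vv (al 0 0) \<le> 1" by (simp add: wel_al vv_def e_def)
  have v1: "welfare 2 vv (al 1 0) \<le> 1" by (simp add: wel_al vv_def e_def)
  have v2: "welfare 2 vv (al 0 20) \<le> 1" by (simp add: wel_al vv_def e_def)
  consider "max 0 (max (vt 0 (e 1)) (vt 1 (e 20))) = 0"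
    | "max 0 (max (vt 0 (e 1)) (vt 1 (e 20))) = vt 0 (e 1)"
    | "max 0 (max (vt 0 (e 1)) (vt 1 (e 20))) = vt 1 (e 20)" by linarith
  then show ?thesis
  proof cases
    case 1
    then have "wdp_solution 2 1 (\<lambda>_. 20) vt (al 0 0)"
      unfolding wdp_solution_def using f0 bound w0 by metis
    then show ?thesis using v0 by blast
  next
    case 2
    then have "wdp_solution 2 1 (\<lambda>_. 20) vt (al 1 0)"
      unfolding wdp_solution_def using f1 bound w1 by metis
    then show ?thesis using v1 by blast
  next
    case 3
    then have "wdp_solution 2 1 (\<lambda>_. 20) vt (al 0 20)"
      unfolding wdp_solution_def using f2 bound w2 by metis
    then show ?thesis using v2 by blast
  qed
qed

lemma dd_range0: "dd 0 p = e 1 \<or> dd 0 p = e 0" by (simp add: dd_def)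
lemma dd_range1: "i \<noteq> 0 \<Longrightarrow> dd i p = e 20 \<or> dd i p = e 0" by (simp add: dd_def)

lemma inf_zero:
  assumes "\<And>p. p \<in> P \<Longrightarrow> dd i p = x \<Longrightarrow> x = e 0"
  shows "inferred_dq 1 P dd i x = 0"
proof -
  have "\<And>p. p \<in> P \<Longrightarrow> dd i p = x \<Longrightarrow> ip 1 x p = 0"
  proof -
    fix p assume "p \<in> P" "dd i p = x"
    then have "x = e 0" by (rule assms)
    then show "ip 1 x p = 0" by (simp add: ip_def e_def)
  qed
  then have S: "{ip 1 x p | p. p \<in> P \<and> dd i p = x} \<union> {0} = {0}"
    by blast
  show ?thesis unfolding inferred_dq_def S by simp
qed

lemma truthful: "P \<subseteq> prices 1 \<Longrightarrow> truthful_dq 2 1 (\<lambda>_. 20) vv P dd"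
  unfolding truthful_dq_def
proof (intro allI impI ballI conjI)
  fix i p assume P: "P \<subseteq> prices 1" and i: "i < (2::nat)" and p: "p \<in> P"
  have q: "0 \<le> p 0" using P p by (auto simp: prices_def)
  show "dd i p \<in> bundles 1 (\<lambda>_. 20)" by (auto simp: dd_def bundles_def e_def)
  fix y assume y: "y \<in> bundles 1 (\<lambda>_. 20)"
  have yle: "y 0 \<le> 20" using y by (auto simp: bundles_def)
  have yq: "0 \<le> real (y 0) * p 0" using q by simp
  show "vv i y - ip 1 y p \<le> vv i (dd i p) - ip 1 (dd i p) p"
  proof (cases "i = 0")
    case True
    have m: "1 \<le> y 0 \<Longrightarrow> p 0 \<le> real (y 0) * p 0"
      using q mult_right_mono[of 1 "real (y 0)" "p 0"] by simp
    have lhs: "vv i y - ip 1 y p = (if 1 \<le> y 0 then 1 else 0) - real (y 0) * p 0"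
      using True by (simp add: vv_def ip1 ip1')
    show ?thesis
    proof (cases "p 0 \<le> 1")
      case c: True
      have r: "vv i (dd i p) - ip 1 (dd i p) p = 1 - p 0"
        using True c by (simp add: vv_def dd_def ip1 ip1' e0)
      then show ?thesis
      proof (cases "1 \<le> y 0")
        case True
        then have "p 0 \<le> real (y 0) * p 0" by (rule m)
        moreover have "(if 1 \<le> y 0 then 1 else 0) = (1::real)" using True by simp
        ultimately show ?thesis using lhs c r by linarith
      next
        case False
        then have "y 0 = 0" by simp
        then have "real (y 0) * p 0 = 0" by simp
        moreover have "(if 1 \<le> y 0 then 1 else 0) = (0::real)" using False by simp
        ultimately show ?thesis using lhs c q r by linarith
      qed
    next
      case c: False
      have r: "vv i (dd i p) - ip 1 (dd i p) p = 0"
        using True c by (simp add: vv_def dd_def ip1 ip1' e0)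
      then show ?thesis
      proof (cases "1 \<le> y 0")
        case True
        then have "p 0 \<le> real (y 0) * p 0" by (rule m)
        moreover have "(if 1 \<le> y 0 then 1 else 0) = (1::real)" using True by simp
        ultimately show ?thesis using lhs c r by linarith
      next
        case False
        then have "y 0 = 0" by simp
        then have "real (y 0) * p 0 = 0" by simp
        moreover have "(if 1 \<le> y 0 then 1 else 0) = (0::real)" using False by simp
        ultimately show ?thesis using lhs c q r by linarith
      qed
    qed
  next
    case False
    have lhs: "vv i y - ip 1 y p = (if y 0 = 20 then 1 else if y 0 = 19 then 9/10 else 0) - real (y 0) * p 0"
      using False by (simp add: vv_def ip1 ip1')
    have m19: "y 0 = 19 \<Longrightarrow> real (y 0) * p 0 = 19 * p 0" by simp
    have m20: "y 0 = 20 \<Longrightarrow> real (y 0) * p 0 = 20 * p 0" by simp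
    show ?thesis
    proof (cases "p 0 \<le> 1/20")
      case c: True
      have r: "vv i (dd i p) - ip 1 (dd i p) p = 1 - 20 * p 0"
        using False c by (simp add: vv_def dd_def ip1 ip1' e0)
      show ?thesis
      proof -
        consider "y 0 = 20" | "y 0 = 19" | "y 0 \<noteq> 20 \<and> y 0 \<noteq> 19" by blast
        then show ?thesis
        proof cases
          case 1
          then have "vv i y - ip 1 y p = 1 - 20 * p 0" using lhs m20 by simp
          then show ?thesis using r c q by linarith
        next
          case 2
          then have "vv i y - ip 1 y p = 9/10 - 19 * p 0" using lhs m19 by simp
          then show ?thesis using r c q by linarith
        next
          case 3
          then have "vv i y - ip 1 y p = - (real (y 0) * p 0)" using lhs by simp
          then show ?thesis using r c q yq by linarith
        qed
      qed
    next
      case c: False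
      have r: "vv i (dd i p) - ip 1 (dd i p) p = 0"
        using False c by (simp add: vv_def dd_def ip1 ip1' e0)
      show ?thesis
      proof -
        consider "y 0 = 20" | "y 0 = 19" | "y 0 \<noteq> 20 \<and> y 0 \<noteq> 19" by blast
        then show ?thesis
        proof cases
          case 1
          then have "vv i y - ip 1 y p = 1 - 20 * p 0" using lhs m20 by simp
          then show ?thesis using r c q by linarith
        next
          case 2
          then have "vv i y - ip 1 y p = 9/10 - 19 * p 0" using lhs m19 by simp
          then show ?thesis using r c q by linarith
        next
          case 3
          then have "vv i y - ip 1 y p = - (real (y 0) * p 0)" using lhs by simp
          then show ?thesis using r c q yq by linarith
        qed
      qed
    qed
  qed
qed

theorem theorem3p2:
  shows "\<exists>(n::nat) (m::nat) (c::nat \<Rightarrow> nat) (v::nat \<Rightarrow> (nat \<Rightarrow> nat) \<Rightarrow> real).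
     (\<forall>i<n. \<forall>x\<in>bundles m c. 0 \<le> v i x) \<and>
     (\<forall>P \<subseteq> prices m.
        (\<exists>dq. truthful_dq n m c v P dq \<and>
           (\<exists>a. wdp_solution n m c (inferred_dq m P dq) a \<and>
                welfare n v a < 55 / 100 * opt_welfare n m c v)) \<and>
        (\<exists>dq. truthful_dq n m c v P dq \<and>
           (\<exists>a. wdp_solution n m c (inferred_dq_vq m v P dq) a \<and>
                welfare n v a < 55 / 100 * opt_welfare n m c v)))"
proof (rule exI[of _ 2], rule exI[of _ 1], rule exI[of _ "\<lambda>_. 20"], rule exI[of _ vv], rule conjI)
  show "\<forall>i<2. \<forall>x\<in>bundles 1 (\<lambda>_. 20). 0 \<le> vv i x" by (simp add: vv_def)
next
  show "\<forall>P \<subseteq> prices 1.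
        (\<exists>dq. truthful_dq 2 1 (\<lambda>_. 20) vv P dq \<and>
           (\<exists>a. wdp_solution 2 1 (\<lambda>_. 20) (inferred_dq 1 P dq) a \<and>
                welfare 2 vv a < 55 / 100 * opt_welfare 2 1 (\<lambda>_. 20) vv)) \<and>
        (\<exists>dq. truthful_dq 2 1 (\<lambda>_. 20) vv P dq \<and>
           (\<exists>a. wdp_solution 2 1 (\<lambda>_. 20) (inferred_dq_vq 1 vv P dq) a \<and>
                welfare 2 vv a < 55 / 100 * opt_welfare 2 1 (\<lambda>_. 20) vv))"
  proof (intro allI impI conjI)
  fix P assume P: "P \<subseteq> prices 1"
  have lt: "1 < 55 / 100 * opt_welfare 2 1 (\<lambda>_. 20) vv" using opt_ge by linarith
  have A0: "\<And>x. x \<noteq> e 1 \<Longrightarrow> inferred_dq 1 P dd 0 x = 0"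
    by (rule inf_zero) (use dd_range0 in blast)
  have A1: "\<And>x. x \<noteq> e 20 \<Longrightarrow> inferred_dq 1 P dd 1 x = 0"
    by (rule inf_zero) (use dd_range1 in blast)
  obtain a where a: "wdp_solution 2 1 (\<lambda>_. 20) (inferred_dq 1 P dd) a" "welfare 2 vv a \<le> 1"
    using wdp_pick[of "inferred_dq 1 P dd", OF A0 A1] by blast
  show "\<exists>dq. truthful_dq 2 1 (\<lambda>_. 20) vv P dq \<and>
           (\<exists>a. wdp_solution 2 1 (\<lambda>_. 20) (inferred_dq 1 P dq) a \<and>
                welfare 2 vv a < 55 / 100 * opt_welfare 2 1 (\<lambda>_. 20) vv)"
    using truthful[OF P] a lt by fastforce
next
  fix P assume P: "P \<subseteq> prices 1"
  have lt: "1 < 55 / 100 * opt_welfare 2 1 (\<lambda>_. 20) vv" using opt_ge by linarith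
  have A0: "\<And>x. x \<noteq> e 1 \<Longrightarrow> inferred_dq 1 P dd 0 x = 0"
    by (rule inf_zero) (use dd_range0 in blast)
  have A1: "\<And>x. x \<noteq> e 20 \<Longrightarrow> inferred_dq 1 P dd 1 x = 0"
    by (rule inf_zero) (use dd_range1 in blast)
  have B0: "\<And>x. x \<noteq> e 1 \<Longrightarrow> inferred_dq_vq 1 vv P dd 0 x = 0"
  proof -
    fix x assume x: "x \<noteq> e 1"
    show "inferred_dq_vq 1 vv P dd 0 x = 0"
    proof (cases "\<exists>p\<in>P. dd 0 p = x")
      case True
      then obtain p where "dd 0 p = x" by blast
      then have "x = e 0" using x dd_range0[of p] by auto
      then show ?thesis using True unfolding inferred_dq_vq_def by (simp add: vv_def e_def)
    next
      case False
      then show ?thesis using A0[OF x] unfolding inferred_dq_vq_def by simp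
    qed
  qed
  have B1: "\<And>x. x \<noteq> e 20 \<Longrightarrow> inferred_dq_vq 1 vv P dd 1 x = 0"
  proof -
    fix x assume x: "x \<noteq> e 20"
    show "inferred_dq_vq 1 vv P dd 1 x = 0"
    proof (cases "\<exists>p\<in>P. dd 1 p = x")
      case True
      then obtain p where "dd 1 p = x" by blast
      then have "x = e 0" using x dd_range1[of 1 p] by auto
      then show ?thesis using True unfolding inferred_dq_vq_def by (simp add: vv_def e_def)
    next
      case False
      then show ?thesis using A1[OF x] unfolding inferred_dq_vq_def by simp
    qed
  qed
  obtain b where b: "wdp_solution 2 1 (\<lambda>_. 20) (inferred_dq_vq 1 vv P dd) b" "welfare 2 vv b \<le> 1"
    using wdp_pick[of "inferred_dq_vq 1 vv P dd", OF B0 B1] by blast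
  show "\<exists>dq. truthful_dq 2 1 (\<lambda>_. 20) vv P dq \<and>
           (\<exists>a. wdp_solution 2 1 (\<lambda>_. 20) (inferred_dq_vq 1 vv P dq) a \<and>
                welfare 2 vv a < 55 / 100 * opt_welfare 2 1 (\<lambda>_. 20) vv)"
    using truthful[OF P] b lt by fastforce
  qed
qed

end
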